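(* Let $L$ be a hyperbolic saddle of a planar vector field with characteristic number $\lambda<1$ having a separatrix loop, and suppose that inside the loop there is another saddle $I$ whose separatrix winds towards the loop in negative time. Consider an unfolding of this vector field in a generic one-parameter family with parameter $\varepsilon$, and let $\varepsilon_n\to 0$ be the parameter values at which a sparkling saddle connection between $L$ and $I$ making $n$ turns around the vanished loop occurs. Suppose that, in a coordinate $x$ on a semitransversal to the loop (with $x=0$ on the loop), the monodromy map of the saddle loop has the form $\Delta(x)=Cx^\lambda$ and the monodromy map for the perturbed loop has the form $Cx^\lambda+\varepsilon$. Let $B$ be the $x$-coordinate of the point where the semitransversal intersects the separatrix of $I$. Then $$\ln(-\ln\varepsilon_n)=-n\ln\lambda+\beta+\theta\lambda^n+o(\lambda^n),$$ where $\beta=\ln\bigl(\frac{\ln C}{1-\lambda}-\ln B\bigr)$ and $\theta=-e^{-\beta}\frac{\ln C}{1-\lambda}$.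
   Context: The characteristic number of a hyperbolic saddle with eigenvalues $\lambda_-<0<\lambda_+$ is $-\lambda_-/\lambda_+$. *)

theory Defs
  imports Complex_Main "HOL-Library.Landau_Symbols"
begin

definition loop_monodromy :: "real \<Rightarrow> real \<Rightarrow> real \<Rightarrow> real \<Rightarrow> real" where
  "loop_monodromy C lam eps x = C * x powr lam + eps"

text \<open>After the loop breaks (parameter eps > 0) the unstable separatrix of L first crosses
  the semitransversal at x = eps.  A sparkling saddle connection between L and I making n turns
  around the vanished loop occurs iff the n-th iterate of the perturbed monodromy map sends this
  point to the point B where the separatrix of I crosses the semitransversal.\<close>
definition sparkling_connection :: "real \<Rightarrow> real \<Rightarrow> real \<Rightarrow> nat \<Rightarrow> real \<Rightarrow> bool" where
  "sparkling_connection C lam B n eps \<longleftrightarrow> ((loop_monodromy C lam eps) ^^ n) eps = B"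

end

theory Submission
  imports Defs
begin

lemma iter_bound:
  fixes lam C e :: real
  assumes l0: "0 < lam" and l1: "lam < 1" and c0: "0 < C" and e0: "0 < e"
    and that: "E = (\<lambda>k. ln ((loop_monodromy C lam e ^^ k) e) - ((1 - lam^k) * (ln C/(1-lam)) + lam^k * ln e))"
  shows "0 \<le> E k \<and> E k \<le> e powr (1-lam)/(C*(1-lam)) \<and> e \<le> (loop_monodromy C lam e ^^ k) e
     \<and> ln ((loop_monodromy C lam e ^^ k) e) = (1 - lam^k) * (ln C/(1-lam)) + lam^k * ln e + E k"
proof (induction k)
  case 0
  then show ?case using that e0 l1 c0 by simp
next
  case (Suc k)
  define x where "x = (loop_monodromy C lam e ^^ k) e"
  define M where "M = e powr (1-lam)/(C*(1-lam))"
  have xe: "e \<le> x" and Ek: "0 \<le> E k" "E k \<le> M"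
    and lx: "ln x = (1 - lam^k) * (ln C/(1-lam)) + lam^k * ln e + E k"
    using Suc unfolding x_def M_def by auto
  have x0: "0 < x" using xe e0 by linarith
  have px: "0 < x powr lam" using x0 by simp
  have pe: "e powr lam \<le> x powr lam" using xe e0 l0 by (simp add: powr_mono2)
  have nxt: "(loop_monodromy C lam e ^^ Suc k) e = C * x powr lam + e"
    by (simp add: x_def loop_monodromy_def)
  define eta where "eta = ln (1 + e / (C * x powr lam))"
  have q0: "0 < e / (C * x powr lam)" using e0 c0 px by simp
  have eta0: "0 \<le> eta" unfolding eta_def using q0 by simp
  have eta1: "eta \<le> e / (C * x powr lam)" unfolding eta_def using q0 ln_add_one_self_le_self by simp
  have "e / (C * x powr lam) \<le> e / (C * e powr lam)"
    using pe e0 c0 px by (intro divide_left_mono mult_left_mono) auto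
  also have "\<dots> = e powr (1-lam) / C"
    using e0 by (simp add: powr_diff powr_one_gt_zero_iff)
  also have "\<dots> = (1-lam) * M" unfolding M_def using l1 by simp
  finally have eta2: "eta \<le> (1-lam) * M" using eta1 by linarith
  have lnn: "ln (C * x powr lam + e) = ln C + lam * ln x + eta"
  proof -
    have "C * x powr lam + e = (C * x powr lam) * (1 + e / (C * x powr lam))"
      using c0 px by (simp add: field_simps)
    then have "ln (C * x powr lam + e) = ln (C * x powr lam) + eta"
      unfolding eta_def using c0 px q0 by (simp add: ln_mult)
    also have "ln (C * x powr lam) = ln C + lam * ln x" using c0 x0 by (simp add: ln_mult ln_powr)
    finally show ?thesis .
  qed
  define K where "K = ln C / (1-lam)"
  have lnC: "ln C = (1-lam) * K" unfolding K_def using l1 by simp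
  have lx': "ln x = (1 - lam^k) * K + lam^k * ln e + E k" using lx K_def by simp
  have EE: "E (Suc k) = lam * E k + eta"
  proof -
    have "E (Suc k) = ln C + lam * ln x + eta - ((1 - lam^Suc k) * K + lam^Suc k * ln e)"
      unfolding that nxt lnn K_def by (simp add: x_def)
    also have "\<dots> = lam * E k + eta" unfolding lnC lx' by (simp add: algebra_simps)
    finally show ?thesis .
  qed
  have "lam * E k \<le> lam * M" using Ek l0 by simp
  then have "E (Suc k) \<le> M" using EE eta2 by (simp add: algebra_simps)
  moreover have "0 \<le> E (Suc k)" using EE Ek l0 eta0 by simp
  moreover have "e \<le> (loop_monodromy C lam e ^^ Suc k) e" using nxt px c0 by simp
  ultimately show ?case unfolding M_def that by simp
qed

lemma my_null_comparison:
  fixes f g :: "nat \<Rightarrow> real"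
  assumes "eventually (\<lambda>x. norm (f x) \<le> g x) sequentially" "g \<longlonglongrightarrow> 0"
  shows "f \<longlonglongrightarrow> 0"
proof -
  have "(\<lambda>x. norm (f x)) \<longlonglongrightarrow> 0"
    by (rule real_tendsto_sandwich[of "\<lambda>_. 0" _ _ g]) (use assms in auto)
  then show ?thesis by (rule tendsto_norm_zero_cancel)
qed

lemma exp_neg_le:
  fixes y :: real assumes "0 < y" shows "exp (- y) \<le> 4 / y^2"
proof -
  have "y/2 \<le> exp (y/2)" using exp_ge_add_one_self[of "y/2"] by linarith
  then have "(y/2)^2 \<le> (exp (y/2))^2" using assms by (intro power_mono) auto
  also have "(exp (y/2))^2 = exp y" by (simp add: power2_eq_square exp_add[symmetric])
  finally have "y^2 / 4 \<le> exp y" by (simp add: power_divide)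
  then have "y^2 \<le> 4 * exp y" by simp
  then show ?thesis using assms by (simp add: exp_minus divide_simps mult.commute)
qed

theorem lemma1:
  fixes lam C B :: real and eps :: "nat \<Rightarrow> real"
  assumes "0 < lam" and "lam < 1"
    and "0 < C" and "0 < B"
    and "B < C powr (1 / (1 - lam))"
    and "\<And>n. 0 < eps n"
    and "eps \<longlonglongrightarrow> 0"
    and "\<And>n. sparkling_connection C lam B n (eps n)"
  shows "let \<beta> = ln (ln C / (1 - lam) - ln B);
             \<theta> = - exp (- \<beta>) * (ln C / (1 - lam))
         in (\<lambda>n. ln (- ln (eps n)) - (- real n * ln lam + \<beta> + \<theta> * lam ^ n))
              \<in> o(\<lambda>n. lam ^ n)"
proof -
  note l0 = assms(1) and l1 = assms(2) and c0 = assms(3) and b0 = assms(4) and bC = assms(5)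
    and e0 = assms(6) and elim = assms(7) and sp = assms(8)
  define K where "K = ln C / (1-lam)"
  define A where "A = K - ln B"
  have "ln B < ln (C powr (1 / (1 - lam)))" using bC b0 c0 by (intro iffD2[OF ln_less_cancel_iff]) auto
  also have "\<dots> = K" unfolding K_def using c0 by (simp add: ln_powr)
  finally have A0: "0 < A" unfolding A_def by simp
  define En where "En = (\<lambda>n. ln ((loop_monodromy C lam (eps n) ^^ n) (eps n))
      - ((1 - lam^n) * (ln C/(1-lam)) + lam^n * ln (eps n)))"
  define M where "M = (\<lambda>n. eps n powr (1-lam)/(C*(1-lam)))"
  have En: "0 \<le> En n \<and> En n \<le> M n \<and> ln B = (1 - lam^n) * K + lam^n * ln (eps n) + En n" for n
    using iter_bound[OF l0 l1 c0 e0[of n], of "\<lambda>k. ln ((loop_monodromy C lam (eps n) ^^ k) (eps n))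
      - ((1 - lam^k) * (ln C/(1-lam)) + lam^k * ln (eps n))" n]
      sp[of n] unfolding sparkling_connection_def En_def M_def K_def by simp
  have Mlim: "M \<longlonglongrightarrow> 0"
  proof -
    have "(\<lambda>n. eps n powr (1-lam)) \<longlonglongrightarrow> 0"
      by (rule tendsto_zero_powrI[OF elim]) (use l1 e0 in \<open>auto intro: less_imp_le always_eventually\<close>)
    then have "(\<lambda>n. eps n powr (1-lam) / (C*(1-lam))) \<longlonglongrightarrow> 0 / (C*(1-lam))"
      using c0 l1 by (intro tendsto_divide) auto
    then show ?thesis unfolding M_def by simp
  qed
  have Elim: "En \<longlonglongrightarrow> 0"
    by (rule real_tendsto_sandwich[of "\<lambda>_. 0" _ _ M]) (use En Mlim in auto)
  have lpow: "(\<lambda>n. lam ^ n) \<longlonglongrightarrow> 0" using l0 l1 by (intro LIMSEQ_power_zero) auto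
  define c where "c = (1-lam) * A / 2"
  have cpos: "0 < c" unfolding c_def using l1 A0 by simp
  define D where "D = 4 / (c^2 * C * (1-lam))"
  have evK: "eventually (\<lambda>n. lam^n * K \<le> A/2) sequentially"
  proof -
    have "(\<lambda>n. lam^n * K) \<longlonglongrightarrow> 0 * K" by (intro tendsto_intros lpow)
    then have "eventually (\<lambda>n. dist (lam^n * K) 0 < A/2) sequentially"
      using A0 unfolding tendsto_iff by (simp only: mult_zero_left)
    then show ?thesis by eventually_elim (simp add: dist_real_def)
  qed
  have Ebound: "eventually (\<lambda>n. En n \<le> D * lam^n * lam^n) sequentially"
    using evK
  proof (rule eventually_mono)
    fix n assume h: "lam^n * K \<le> A/2"
    have ln0: "lam^n * ln (eps n) \<le> - A/2" using En[of n] h unfolding A_def by (simp add: algebra_simps)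
    have ln1: "c / lam^n \<le> -(1-lam) * ln (eps n)"
    proof -
      have "c = (1-lam) * (A/2)" unfolding c_def by simp
      also have "\<dots> \<le> (1-lam) * (- (lam^n * ln (eps n)))" using ln0 l1 by (intro mult_left_mono) auto
      finally have "c \<le> lam^n * (-(1-lam) * ln (eps n))" by (simp add: algebra_simps)
      then show ?thesis using l0 by (simp add: divide_le_eq mult.commute)
    qed
    define y where "y = -(1-lam) * ln (eps n)"
    have ypos: "0 < y" using ln1 cpos l0 unfolding y_def
      by (smt (verit) divide_pos_pos zero_less_power)
    have "eps n powr (1-lam) = exp (- y)" unfolding y_def using e0[of n] by (simp add: powr_def algebra_simps)
    also have "\<dots> \<le> 4 / y^2" by (rule exp_neg_le[OF ypos])
    also have "\<dots> \<le> 4 / (c / lam^n)^2"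
      using ln1 cpos l0 ypos unfolding y_def[symmetric]
      by (intro divide_left_mono power_mono mult_pos_pos) auto
    also have "\<dots> = 4 * lam^n * lam^n / c^2" using l0 by (simp add: power2_eq_square field_simps)
    finally have "eps n powr (1-lam) \<le> 4 * lam^n * lam^n / c^2" .
    then have "M n \<le> (4 * lam^n * lam^n / c^2) / (C * (1-lam))"
      unfolding M_def using c0 l1 by (intro divide_right_mono) auto
    also have "\<dots> = D * lam^n * lam^n" unfolding D_def by simp
    finally show "En n \<le> D * lam^n * lam^n" using En[of n] by linarith
  qed
  have Elim2: "(\<lambda>n. En n / lam^n) \<longlonglongrightarrow> 0"
  proof (rule real_tendsto_sandwich[of "\<lambda>_. 0" _ _ "\<lambda>n. D * lam^n"])
    show "eventually (\<lambda>n. 0 \<le> En n / lam^n) sequentially" using En l0 by auto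
    show "eventually (\<lambda>n. En n / lam^n \<le> D * lam^n) sequentially"
      using Ebound by eventually_elim (use l0 in \<open>simp add: divide_le_eq\<close>)
    have "(\<lambda>n. D * lam^n) \<longlonglongrightarrow> D * 0" by (intro tendsto_intros lpow)
    then show "(\<lambda>n. D * lam^n) \<longlonglongrightarrow> 0" by simp
  qed auto
  define u where "u = (\<lambda>n. (En n - lam^n * K) / A)"
  have ulim: "u \<longlonglongrightarrow> 0"
  proof -
    have "(\<lambda>n. (En n - lam^n * K) / A) \<longlonglongrightarrow> (0 - 0 * K) / A"
      by (intro tendsto_intros lpow Elim) (use A0 in auto)
    then show ?thesis unfolding u_def by simp
  qed
  have lneps: "- ln (eps n) = A * (1 + u n) / lam^n" for n
  proof -
    have "lam^n * (- ln (eps n)) = A * (1 + u n)"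
    proof -
      have 1: "A * (1 + u n) = A + En n - lam^n * K" unfolding u_def using A0 by (simp add: field_simps)
      have 2: "ln B = K - lam^n * K + lam^n * ln (eps n) + En n" using En[of n] by (simp add: algebra_simps)
      have 3: "A + En n - lam^n * K = lam^n * (- ln (eps n))" using 2 unfolding A_def by (simp add: algebra_simps)
      show ?thesis using 1 3 by simp
    qed
    then show ?thesis using l0 by (simp add: field_simps)
  qed
  have ev: "eventually (\<lambda>n. \<bar>u n\<bar> \<le> 1/2) sequentially"
    using ulim unfolding tendsto_iff by (auto elim!: allE[of _ "1/2"] eventually_mono simp: dist_real_def)
  define \<beta> where "\<beta> = ln (ln C / (1 - lam) - ln B)"
  define \<theta> where "\<theta> = - exp (- \<beta>) * (ln C / (1 - lam))"
  have b: "\<beta> = ln A" unfolding \<beta>_def A_def K_def ..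
  have th: "\<theta> = - K / A" unfolding \<theta>_def b K_def using A0 by (simp add: exp_minus field_simps)
  define f where "f = (\<lambda>n. ln (- ln (eps n)) - (- real n * ln lam + \<beta> + \<theta> * lam ^ n))"
  define g where "g = (\<lambda>n. (ln (1 + u n) - u n) / lam^n + (En n / lam^n) / A)"
  have fg: "eventually (\<lambda>n. g n = f n / lam^n) sequentially"
    using ev
  proof (rule eventually_mono)
    fix n assume h: "\<bar>u n\<bar> \<le> 1/2"
    have pu: "0 < 1 + u n" using h by linarith
    have "ln (- ln (eps n)) = ln A + ln (1 + u n) - real n * ln lam"
      unfolding lneps using A0 pu l0 by (simp add: ln_mult ln_div ln_realpow)
    then have "f n = ln (1 + u n) + K / A * lam^n"
      unfolding f_def b th by simp
    moreover have "u n = En n / A - K / A * lam^n" unfolding u_def using A0 by (simp add: field_simps)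
    ultimately have "f n = (ln (1 + u n) - u n) + En n / A" by simp
    then have "f n / lam^n = (ln (1 + u n) - u n) / lam^n + En n / A / lam^n"
      by (simp add: add_divide_distrib)
    then show "g n = f n / lam^n"
      unfolding g_def by simp
  qed
  have glim: "g \<longlonglongrightarrow> 0"
  proof -
    have a: "(\<lambda>n. (ln (1 + u n) - u n) / lam^n) \<longlonglongrightarrow> 0"
    proof (rule my_null_comparison)
      show "eventually (\<lambda>n. norm ((ln (1 + u n) - u n) / lam^n) \<le> 2 * (En n / lam^n - K) * u n / A) sequentially"
        using ev
      proof (rule eventually_mono)
        fix n assume h: "\<bar>u n\<bar> \<le> 1/2"
        have "norm ((ln (1 + u n) - u n) / lam^n) = \<bar>ln (1 + u n) - u n\<bar> / lam^n"
          using l0 by simp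
        also have "\<dots> \<le> 2 * (u n)^2 / lam^n"
          using abs_ln_one_plus_x_minus_x_bound[OF h] l0 by (intro divide_right_mono) auto
        also have "\<dots> = 2 * (En n / lam^n - K) * u n / A"
          unfolding u_def using l0 A0 by (simp add: power2_eq_square field_simps)
        finally show "norm ((ln (1 + u n) - u n) / lam^n) \<le> 2 * (En n / lam^n - K) * u n / A" .
      qed
      have "(\<lambda>n. 2 * (En n / lam^n - K) * u n / A) \<longlonglongrightarrow> 2 * (0 - K) * 0 / A"
        by (intro tendsto_intros Elim2 ulim) (use A0 in auto)
      then show "(\<lambda>n. 2 * (En n / lam^n - K) * u n / A) \<longlonglongrightarrow> 0" by simp
    qed
    have "g \<longlonglongrightarrow> 0 + 0 / A" unfolding g_def by (intro tendsto_intros a Elim2) (use A0 in auto)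
    then show ?thesis by simp
  qed
  have "(\<lambda>n. f n / lam^n) \<longlonglongrightarrow> 0"
    using glim fg by (rule Lim_transform_eventually)
  then have "f \<in> o(\<lambda>n. lam ^ n)"
    by (rule smalloI_tendsto) (use l0 in auto)
  then show ?thesis unfolding f_def \<beta>_def \<theta>_def Let_def .
qed

end
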